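(* Let $q,z,m,t$ be positive integers with $q\geq 2$, $z<q$ and $t<m$, and put $L=\lfloor\frac{q-1}{q-z}\rfloor$. Let $\mathbf{P}=(p_{\mathbf{a},\mathbf{b}})$ be the array (described in the context) with rows indexed by $$\mathcal{F}=\{\mathbf{a}=(a_0,\ldots,a_{m-1},\varepsilon_0,\ldots,\varepsilon_{t-1}) : a_0,\ldots,a_{m-1}\in\mathbb{Z}_q,\ \varepsilon_0,\ldots,\varepsilon_{t-1}\in\{0,1,\ldots,L-1\}\}$$ and columns indexed by $$\mathcal{K}=\{\mathbf{b}=(b_0,\ldots,b_{t-1},\delta_0,\ldots,\delta_{t-1}) : b_0,\ldots,b_{t-1}\in\mathbb{Z}_q,\ 0\leq\delta_0<\delta_1<\cdots<\delta_{t-1}<m\},$$ where for $\mathbf{a}\in\mathcal{F}$, $\mathbf{b}\in\mathcal{K}$: $p_{\mathbf{a},\mathbf{b}}=*$ if $a_{\delta_i}\in X_{b_i,z}:=\{b_i,b_i-1,\ldots,b_i-(z-1)\}$ for some $i\in\{0,\ldots,t-1\}$; otherwise $p_{\mathbf{a},\mathbf{b}}$ is the vector $(c_0,\ldots,c_{m-1},a_{\delta_0}-b_0-1,\ldots,a_{\delta_{t-1}}-b_{t-1}-1)$, where $c_{\delta_i}=b_i-\varepsilon_i(q-z)$ for $i\in\{0,\ldots,t-1\}$ and $c_l=a_l$ for $l\notin\{\delta_0,\ldots,\delta_{t-1}\}$ (all arithmetic modulo $q$). Then $\mathbf{P}$ is a $\big(\binom{m}{t}q^t,\ L^t q^m,\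 L^t(q^m-q^{m-t}(q-z)^t),\ (q-z)^t q^m\big)$ placement delivery array. In particular $Z/F=1-(\frac{q-z}{q})^t$ and $S/F=(q-z)^t/L^t$, so the associated coded caching scheme has $\frac{M}{N}=1-(\frac{q-z}{q})^t$ and rate $R=(q-z)^t/L^t$.
   Context: A $(K,F,Z,S)$ placement delivery array (PDA) is an $F\times K$ array whose entries are either a special symbol $*$ or one of $S$ distinct non-star symbols (identified with $1,\ldots,S$), such that: (C1) $*$ appears exactly $Z$ times in each column; (C2) each of the $S$ symbols occurs at least once; (C3) for any two distinct entries $p_{j_1,k_1}=p_{j_2,k_2}=s$ with $s$ a non-star symbol, we have $j_1\neq j_2$, $k_1\neq k_2$, and $p_{j_1,k_2}=p_{j_2,k_1}=*$. A $(K,F,Z,S)$ PDA yields an $F$-division coded caching scheme for $K$ users with memory ratio $M/N=Z/F$ and rate $R=S/F$. The non-star symbols of $\mathbf{P}$ are vectors in $\mathbb{Z}_q^{m+t}$. *)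

theory Defs
  imports Complex_Main
begin

text \<open>Generic placement delivery array. Rows are indexed by the finite set R,
  columns by the finite set C; an entry is None for the star symbol and
  Some s for a non-star symbol s.\<close>
definition is_PDA ::
  "'r set \<Rightarrow> 'c set \<Rightarrow> ('r \<Rightarrow> 'c \<Rightarrow> 's option) \<Rightarrow> nat \<Rightarrow> nat \<Rightarrow> nat \<Rightarrow> nat \<Rightarrow> bool" where
  "is_PDA R C p K F Z S \<longleftrightarrow>
     finite R \<and> finite C \<and> card C = K \<and> card R = F \<and>
     (\<forall>k\<in>C. card {j\<in>R. p j k = None} = Z) \<and>
     card {s. \<exists>j\<in>R. \<exists>k\<in>C. p j k = Some s} = S \<and>
     (\<forall>j1\<in>R. \<forall>j2\<in>R. \<forall>k1\<in>C. \<forall>k2\<in>C. \<forall>s.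
        p j1 k1 = Some s \<longrightarrow> p j2 k2 = Some s \<longrightarrow> (j1, k1) \<noteq> (j2, k2) \<longrightarrow>
        j1 \<noteq> j2 \<and> k1 \<noteq> k2 \<and> p j1 k2 = None \<and> p j2 k1 = None)"

definition modq :: "nat \<Rightarrow> int \<Rightarrow> nat" where
  "modq q x = nat (x mod int q)"

definition Xset :: "nat \<Rightarrow> nat \<Rightarrow> nat \<Rightarrow> nat set" where
  "Xset q z b = {modq q (int b - int j) | j. j < z}"

definition Lpar :: "nat \<Rightarrow> nat \<Rightarrow> nat" where
  "Lpar q z = (q - 1) div (q - z)"

definition rowsF :: "nat \<Rightarrow> nat \<Rightarrow> nat \<Rightarrow> nat \<Rightarrow> (nat list \<times> nat list) set" where
  "rowsF q z m t = {(a, eps). length a = m \<and> (\<forall>x\<in>set a. x < q) \<and>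
                     length eps = t \<and> (\<forall>x\<in>set eps. x < Lpar q z)}"

definition colsK :: "nat \<Rightarrow> nat \<Rightarrow> nat \<Rightarrow> (nat list \<times> nat list) set" where
  "colsK q m t = {(b, del). length b = t \<and> (\<forall>x\<in>set b. x < q) \<and>
                   length del = t \<and> sorted_wrt (<) del \<and> (\<forall>x\<in>set del. x < m)}"

definition pent :: "nat \<Rightarrow> nat \<Rightarrow> nat \<Rightarrow> nat \<Rightarrow> (nat list \<times> nat list) \<Rightarrow> (nat list \<times> nat list) \<Rightarrow> nat list option" where
  "pent q z m t row col =
    (case row of (a, eps) \<Rightarrow> case col of (b, del) \<Rightarrow>
      if \<exists>i<t. a ! (del ! i) \<in> Xset q z (b ! i) then None
      else Some (fold (\<lambda>i c. c[del ! i := modq q (int (b ! i) - int (eps ! i) * int (q - z))]) [0..<t] a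
                 @ map (\<lambda>i. modq q (int (a ! (del ! i)) - int (b ! i) - 1)) [0..<t]))"

end

theory Submission
  imports Defs "HOL-Library.FuncSet"
begin

lemma modq_lt: "0 < q \<Longrightarrow> modq q x < q"
  unfolding modq_def by (simp add: nat_less_iff)

lemma int_modq: "0 < q \<Longrightarrow> int (modq q x) = x mod int q"
  unfolding modq_def by simp

lemma X_iff:
  assumes "x < q" "z \<le> q"
  shows "x \<in> Xset q z b \<longleftrightarrow> (int b - int x) mod int q < int z"
proof
  assume "x \<in> Xset q z b"
  then obtain j where j: "j < z" "x = modq q (int b - int j)" unfolding Xset_def by auto
  have "int x = (int b - int j) mod int q" using j assms by (simp add: int_modq)
  hence "(int b - int x) mod int q = (int b - (int b - int j)) mod int q"
    by (metis mod_diff_right_eq)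
  also have "\<dots> = int j" using j assms by simp
  finally show "(int b - int x) mod int q < int z" using j by simp
next
  assume h: "(int b - int x) mod int q < int z"
  define j where "j = nat ((int b - int x) mod int q)"
  have q0: "0 < q" using assms by simp
  have nn: "0 \<le> (int b - int x) mod int q" using q0 by simp
  have jz: "j < z" using h nn unfolding j_def by (simp add: nat_less_iff)
  have "int j = (int b - int x) mod int q" using q0 unfolding j_def by simp
  hence "(int b - int j) mod int q = (int b - (int b - int x)) mod int q"
    by (metis mod_diff_right_eq)
  also have "\<dots> = int x" using assms by simp
  finally have "x = modq q (int b - int j)" unfolding modq_def by simp
  thus "x \<in> Xset q z b" using jz unfolding Xset_def by auto
qed

lemma Xset_sub: "0 < q \<Longrightarrow> Xset q z b \<subseteq> {..<q}"
  unfolding Xset_def using modq_lt by auto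

lemma card_Xset:
  assumes "z \<le> q" "0 < q"
  shows "card (Xset q z b) = z"
proof -
  have e: "Xset q z b = (\<lambda>j. modq q (int b - int j)) ` {..<z}" unfolding Xset_def by auto
  have "inj_on (\<lambda>j. modq q (int b - int j)) {..<z}"
  proof
    fix j j' assume "j \<in> {..<z}" "j' \<in> {..<z}" and h: "modq q (int b - int j) = modq q (int b - int j')"
    hence "(int b - int j) mod int q = (int b - int j') mod int q" using assms by (metis int_modq)
    hence "(int b - (int b - int j)) mod int q = (int b - (int b - int j')) mod int q"
      by (metis mod_diff_right_eq)
    thus "j = j'" using \<open>j \<in> _\<close> \<open>j' \<in> _\<close> assms by simp
  qed
  thus ?thesis using e card_image by fastforce
qed

lemma eps_bound:
  assumes "e < Lpar q z" "z < q"
  shows "e * (q - z) < z"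
proof -
  have "Suc e \<le> (q - 1) div (q - z)" using assms unfolding Lpar_def by simp
  hence "Suc e * (q - z) \<le> q - 1" using assms
    by (metis div_le_mono div_mult_self_is_m le_0_eq mult_is_0 not_less zero_less_diff nat_le_linear le_div_geq less_mult_imp_div_less) 
  thus ?thesis using assms by simp
qed

lemma lemA:
  assumes "e * (q - z) < z"
  shows "modq q (int b - int e * int (q - z)) \<in> Xset q z b"
  unfolding Xset_def using assms by (auto intro!: exI[of _ "e * (q - z)"])

lemma lemB:
  assumes "x < q" "b < q" "b' < q" "z < q" "0 < z"
    "x \<notin> Xset q z b" "x \<notin> Xset q z b'" "e * (q - z) < z" "e' * (q - z) < z"
    "modq q (int b - int e * int (q - z)) = modq q (int b' - int e' * int (q - z))"
  shows "b = b' \<and> e = e'"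
proof -
  define k where "k = (int b - int x) mod int q"
  define k' where "k' = (int b' - int x) mod int q"
  have q0: "0 < q" using assms by simp
  have kb: "int z \<le> k" "k < int q" using X_iff[of x q z b] assms q0 unfolding k_def by auto
  have kb': "int z \<le> k'" "k' < int q" using X_iff[of x q z b'] assms q0 unfolding k'_def by auto
  define D where "D = int (q - z)"
  have D: "D = int q - int z" using assms unfolding D_def by simp
  have eD: "int e * D < int z" "int e' * D < int z" using assms(8,9) unfolding D_def
    by (metis of_nat_less_iff of_nat_mult)+
  have eD0: "0 \<le> int e * D" "0 \<le> int e' * D" using D assms by auto
  have m1: "(int b - int e * D) mod int q = (int b' - int e' * D) mod int q"
    using assms(10) q0 unfolding D_def by (metis int_modq)
  have d1: "int q dvd (int b - int e * D) - (int b' - int e' * D)"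
    using m1 by (simp add: mod_eq_dvd_iff)
  have d2: "int q dvd (int b - int x) - k" unfolding k_def by (simp add: mod_eq_dvd_iff)
  have d3: "int q dvd (int b' - int x) - k'" unfolding k'_def by (simp add: mod_eq_dvd_iff)
  define y where "y = k - k' - int e * D + int e' * D"
  have dy: "int q dvd y"
  proof -
    have "y = ((int b - int e * D) - (int b' - int e' * D)) - ((int b - int x) - k) + ((int b' - int x) - k')"
      unfolding y_def by simp
    thus ?thesis using d1 d2 d3 by (metis dvd_add dvd_diff)
  qed
  have "\<bar>y\<bar> < int q" unfolding y_def using kb kb' eD eD0 by linarith
  hence y0: "y = 0" using dy dvd_imp_le_int[of y "int q"] by (cases "y = 0") auto
  have ee: "e = e'"
  proof (rule ccontr)
    assume "e \<noteq> e'"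
    hence "e < e' \<or> e' < e" by linarith
    thus False
    proof
      assume "e < e'"
      hence "D \<le> (int e' - int e) * D" using D assms by (simp add: mult_le_cancel_right1)
      thus False using y0 unfolding y_def using kb kb' D by (simp add: algebra_simps)
    next
      assume "e' < e"
      hence "D \<le> (int e - int e') * D" using D assms by (simp add: mult_le_cancel_right1)
      thus False using y0 unfolding y_def using kb kb' D by (simp add: algebra_simps)
    qed
  qed
  hence "k = k'" using y0 unfolding y_def by simp
  hence "int b - int b' = ((int b - int x) - k) - ((int b' - int x) - k')" by simp
  hence "int q dvd int b - int b'" using d2 d3 by (metis dvd_diff)
  moreover have "\<bar>int b - int b'\<bar> < int q" using assms(2,3) by linarith
  ultimately have "int b - int b' = 0" using dvd_imp_le_int[of "int b - int b'" "int q"] by (cases "int b - int b' = 0") auto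
  hence "b = b'" by simp
  thus ?thesis using ee by simp
qed

lemma fold_len: "length (fold (\<lambda>i c. c[d ! i := g i]) xs a) = length a"
  by (induction xs arbitrary: a) auto

lemma fold_other: "l \<notin> (\<lambda>i. d ! i) ` set xs \<Longrightarrow> fold (\<lambda>i c. c[d ! i := g i]) xs a ! l = a ! l"
  by (induction xs arbitrary: a) auto

lemma fold_in: "distinct (map (\<lambda>i. d ! i) xs) \<Longrightarrow> i \<in> set xs \<Longrightarrow> d ! i < length a \<Longrightarrow>
   fold (\<lambda>i c. c[d ! i := g i]) xs a ! (d ! i) = g i"
proof (induction xs arbitrary: a)
  case Nil then show ?case by simp
next
  case (Cons j xs)
  show ?case
  proof (cases "i \<in> set xs")
    case True
    then show ?thesis using Cons by simp
  next
    case False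
    hence "i = j" using Cons by simp
    hence "d ! i \<notin> (\<lambda>i. d ! i) ` set xs" using Cons.prems(1) by auto
    then show ?thesis using \<open>i = j\<close> Cons.prems by (simp add: fold_other)
  qed
qed

lemma img_d: "length d = t \<Longrightarrow> (\<lambda>i. d ! i) ` set [0..<t] = set d"
  by (metis map_nth set_map)

lemma img_d': "length d = t \<Longrightarrow> (\<lambda>i. d ! i) ` {0..<t} = set d"
  using img_d[of d t] by simp

lemma dvd_small: "int q dvd int x - int y \<Longrightarrow> x < q \<Longrightarrow> y < q \<Longrightarrow> x = y"
proof -
  assume h: "int q dvd int x - int y" "x < q" "y < q"
  have "\<bar>int x - int y\<bar> < int q" using h by linarith
  hence "int x - int y = 0" using h dvd_imp_le_int[of "int x - int y" "int q"] by (cases "int x - int y = 0") auto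
  thus "x = y" by simp
qed

lemma modq_cancel: "modq q (int x - c) = modq q (int y - c) \<Longrightarrow> x < q \<Longrightarrow> y < q \<Longrightarrow> x = y"
proof -
  assume h: "modq q (int x - c) = modq q (int y - c)" "x < q" "y < q"
  hence "(int x - c) mod int q = (int y - c) mod int q" by (metis int_modq gr_implies_not0 neq0_conv)
  hence "int q dvd (int x - c) - (int y - c)" by (simp add: mod_eq_dvd_iff)
  hence "int q dvd int x - int y" by simp
  thus "x = y" using h dvd_small by blast
qed

lemma pent_eq:
  "pent q z m t (a, e) (b, d) =
    (if \<exists>i<t. a ! (d ! i) \<in> Xset q z (b ! i) then None
     else Some (fold (\<lambda>i c. c[d ! i := (\<lambda>i. modq q (int (b ! i) - int (e ! i) * int (q - z))) i]) [0..<t] a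
        @ map (\<lambda>i. modq q (int (a ! (d ! i)) - int (b ! i) - 1)) [0..<t]))"
  unfolding pent_def by simp

lemma rowsF_D: "(a, e) \<in> rowsF q z m t \<Longrightarrow> length a = m \<and> (\<forall>l<m. a ! l < q) \<and> length e = t \<and> (\<forall>i<t. e ! i < Lpar q z)"
  unfolding rowsF_def by (auto simp: all_set_conv_all_nth)

lemma colsK_D: "(b, d) \<in> colsK q m t \<Longrightarrow> length b = t \<and> (\<forall>i<t. b ! i < q) \<and> length d = t \<and> distinct d \<and> sorted d \<and> (\<forall>i<t. d ! i < m)"
  unfolding colsK_def by (auto simp: all_set_conv_all_nth strict_sorted_iff)

lemma key:
  assumes qz: "0 < z" "z < q"
    and R: "(a, e) \<in> rowsF q z m t" "(a', e') \<in> rowsF q z m t"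
    and C: "(b, d) \<in> colsK q m t" "(b', d') \<in> colsK q m t"
    and s1: "pent q z m t (a, e) (b, d) = Some s" and s2: "pent q z m t (a', e') (b', d') = Some s"
    and n: "pent q z m t (a, e) (b', d') \<noteq> None"
  shows "a = a' \<and> e = e' \<and> b = b' \<and> d = d'"
proof -
  define g1 where "g1 = (\<lambda>i. modq q (int (b ! i) - int (e ! i) * int (q - z)))"
  define g2 where "g2 = (\<lambda>i. modq q (int (b' ! i) - int (e' ! i) * int (q - z)))"
  define G1 where "G1 = fold (\<lambda>i c. c[d ! i := g1 i]) [0..<t] a"
  define G2 where "G2 = fold (\<lambda>i c. c[d' ! i := g2 i]) [0..<t] a'"
  define U1 where "U1 = map (\<lambda>i. modq q (int (a ! (d ! i)) - int (b ! i) - 1)) [0..<t]"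
  define U2 where "U2 = map (\<lambda>i. modq q (int (a' ! (d' ! i)) - int (b' ! i) - 1)) [0..<t]"
  have N1: "\<forall>i<t. a ! (d ! i) \<notin> Xset q z (b ! i)" and S1: "s = G1 @ U1"
    using s1 unfolding pent_eq G1_def g1_def U1_def by (auto split: if_splits)
  have N2: "\<forall>i<t. a' ! (d' ! i) \<notin> Xset q z (b' ! i)" and S2: "s = G2 @ U2"
    using s2 unfolding pent_eq G2_def g2_def U2_def by (auto split: if_splits)
  have N3: "\<forall>i<t. a ! (d' ! i) \<notin> Xset q z (b' ! i)"
    using n unfolding pent_eq by (auto split: if_splits)
  note r1 = rowsF_D[OF R(1)] and r2 = rowsF_D[OF R(2)] and c1 = colsK_D[OF C(1)] and c2 = colsK_D[OF C(2)]
  have lG: "length G1 = m" "length G2 = m" unfolding G1_def G2_def using r1 r2 by (simp_all add: fold_len)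
  have GU: "G1 = G2" "U1 = U2" using S1 S2 lG by simp_all
  have G1o: "\<And>l. l \<notin> set d \<Longrightarrow> G1 ! l = a ! l"
    unfolding G1_def by (rule fold_other) (use c1 img_d'[of d t] in auto)
  have G2o: "\<And>l. l \<notin> set d' \<Longrightarrow> G2 ! l = a' ! l"
    unfolding G2_def by (rule fold_other) (use c2 img_d'[of d' t] in auto)
  have md1: "map (\<lambda>i. d ! i) [0..<t] = d" using c1 map_nth[of d] by simp
  have md2: "map (\<lambda>i. d' ! i) [0..<t] = d'" using c2 map_nth[of d'] by simp
  have G1i: "\<And>i. i < t \<Longrightarrow> G1 ! (d ! i) = g1 i"
    unfolding G1_def using c1 r1 md1 by (intro fold_in) auto
  have G2i: "\<And>i. i < t \<Longrightarrow> G2 ! (d' ! i) = g2 i"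
    unfolding G2_def using c2 r2 md2 by (intro fold_in) auto
  have sub: "set d' \<subseteq> set d"
  proof
    fix l assume "l \<in> set d'"
    then obtain j where j: "j < t" "l = d' ! j" using c2 by (auto simp: in_set_conv_nth)
    show "l \<in> set d"
    proof (rule ccontr)
      assume "l \<notin> set d"
      hence "a ! l = g2 j" using G1o[OF \<open>l \<notin> set d\<close>] G2i[OF j(1)] GU(1) j(2) by simp
      moreover have "e' ! j * (q - z) < z" using eps_bound r2 j qz by blast
      ultimately have "a ! (d' ! j) \<in> Xset q z (b' ! j)" unfolding g2_def using lemA[of "e' ! j" q z "b' ! j"] j(2) by simp
      thus False using N3 j by blast
    qed
  qed
  have "card (set d') = card (set d)" using c1 c2 by (simp add: distinct_card)
  hence "set d' = set d" using sub by (simp add: card_subset_eq)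
  hence dd: "d = d'" using c1 c2 sorted_distinct_set_unique[of d d'] by simp
  have be: "b ! i = b' ! i \<and> e ! i = e' ! i" if i: "i < t" for i
  proof (rule lemB[of "a ! (d ! i)" q])
    show "a ! (d ! i) < q" using r1 c1 i by simp
    show "b ! i < q" "b' ! i < q" using c1 c2 i by auto
    show "z < q" "0 < z" by (fact qz(2), fact qz(1))
    show "a ! (d ! i) \<notin> Xset q z (b ! i)" using N1 i by simp
    show "a ! (d ! i) \<notin> Xset q z (b' ! i)" using N3 i dd by simp
    show "e ! i * (q - z) < z" "e' ! i * (q - z) < z" using eps_bound r1 r2 i qz by blast+
    show "modq q (int (b ! i) - int (e ! i) * int (q - z)) = modq q (int (b' ! i) - int (e' ! i) * int (q - z))"
    proof -
      have "g1 i = g2 i" using G1i[OF i] G2i[OF i] GU(1) dd by simp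
      thus ?thesis unfolding g1_def g2_def .
    qed
  qed
  have bb: "b = b'" using c1 c2 be by (intro nth_equalityI) auto
  have ee: "e = e'" using r1 r2 be by (intro nth_equalityI) auto
  have aa: "a = a'"
  proof (rule nth_equalityI)
    show "length a = length a'" using r1 r2 by simp
    fix l assume "l < length a"
    hence l: "l < m" using r1 by simp
    show "a ! l = a' ! l"
    proof (cases "l \<in> set d")
      case True
      then obtain i where i: "i < t" "l = d ! i" using c1 by (auto simp: in_set_conv_nth)
      have "U1 ! i = U2 ! i" using GU by simp
      hence "modq q (int (a ! l) - (int (b ! i) + 1)) = modq q (int (a' ! l) - (int (b ! i) + 1))"
        unfolding U1_def U2_def using i dd bb by (simp add: algebra_simps)
      thus ?thesis using modq_cancel r1 r2 l by blast
    next
      case False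
      thus ?thesis using G1o[OF False] G2o GU(1) dd False by simp
    qed
  qed
  show ?thesis using aa bb ee dd by simp
qed

definition LS :: "nat \<Rightarrow> (nat \<Rightarrow> 'a set) \<Rightarrow> 'a list set" where
  "LS n A = {xs. length xs = n \<and> (\<forall>l<n. xs ! l \<in> A l)}"

lemma card_LS:
  fixes A :: "nat \<Rightarrow> 'a set"
  assumes "\<And>l. l < n \<Longrightarrow> finite (A l)"
  shows "card (LS n A) = (\<Prod>l<n. card (A l))"
proof -
  define f where "f = (\<lambda>xs::'a list. restrict (\<lambda>i. xs ! i) {..<n})"
  have "bij_betw f (LS n A) (PiE {..<n} A)"
  proof (rule bij_betw_imageI)
    show "inj_on f (LS n A)"
    proof
      fix xs ys assume xs: "xs \<in> LS n A" and ys: "ys \<in> LS n A" and h: "f xs = f ys"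
      have "\<forall>i<n. xs ! i = ys ! i"
      proof (intro allI impI)
        fix i assume "i < n"
        have "f xs i = f ys i" using h by simp
        thus "xs ! i = ys ! i" using \<open>i < n\<close> unfolding f_def by simp
      qed
      thus "xs = ys" using xs ys unfolding LS_def by (auto intro: nth_equalityI)
    qed
    show "f ` LS n A = PiE {..<n} A"
    proof
      show "f ` LS n A \<subseteq> PiE {..<n} A"
      proof (rule image_subsetI)
        fix xs assume "xs \<in> LS n A"
        thus "f xs \<in> PiE {..<n} A" unfolding f_def LS_def by (subst restrict_PiE_iff) auto
      qed
      show "PiE {..<n} A \<subseteq> f ` LS n A"
      proof
        fix g assume g: "g \<in> PiE {..<n} A"
        define xs where "xs = map g [0..<n]"
        have "xs \<in> LS n A" using g unfolding xs_def LS_def by auto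
        moreover have "f xs = g"
        proof
          fix i show "f xs i = g i"
            using g unfolding f_def xs_def by (cases "i < n") (auto simp: PiE_def extensional_def)
        qed
        ultimately show "g \<in> f ` LS n A" by (metis imageI)
      qed
    qed
  qed
  hence "card (LS n A) = card (PiE {..<n} A)" by (rule bij_betw_same_card)
  also have "\<dots> = (\<Prod>l<n. card (A l))" by (rule card_PiE) simp
  finally show ?thesis .
qed

lemma card_LS_const: "card (LS n (\<lambda>_. {..<k})) = k ^ n"
  by (simp add: card_LS)

lemma LS_bound: "{xs. length xs = n \<and> (\<forall>x\<in>set xs. x < k)} = LS n (\<lambda>_. {..<k})"
  unfolding LS_def by (auto simp: all_set_conv_all_nth)

lemma rowsF_eq: "rowsF q z m t = LS m (\<lambda>_. {..<q}) \<times> LS t (\<lambda>_. {..<Lpar q z})"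
  unfolding rowsF_def LS_def by (auto simp: all_set_conv_all_nth)

lemma card_rowsF: "card (rowsF q z m t) = Lpar q z ^ t * q ^ m"
  unfolding rowsF_eq by (simp add: card_cartesian_product card_LS_const)

lemma finite_LS_const: "finite (LS n (\<lambda>_. {..<k::nat}))"
  by (rule finite_subset[OF _ finite_lists_length_eq[of "{..<k}" n]]) (auto simp: LS_def in_set_conv_nth)

lemma finite_rowsF: "finite (rowsF q z m t)"
  unfolding rowsF_eq by (simp add: finite_LS_const)

definition Dl :: "nat \<Rightarrow> nat \<Rightarrow> nat list set" where
  "Dl m t = {d. length d = t \<and> sorted_wrt (<) d \<and> (\<forall>x\<in>set d. x < m)}"

lemma card_Dl: "card (Dl m t) = m choose t"
proof -
  have inj: "inj_on set (Dl m t)"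
  proof
    fix x y assume "x \<in> Dl m t" "y \<in> Dl m t" "set x = set y"
    thus "x = y" using sorted_distinct_set_unique[of x y] by (simp add: Dl_def strict_sorted_iff)
  qed
  have img: "set ` Dl m t = {S. S \<subseteq> {..<m} \<and> card S = t}"
  proof
    show "set ` Dl m t \<subseteq> {S. S \<subseteq> {..<m} \<and> card S = t}"
      unfolding Dl_def by (auto simp: strict_sorted_iff distinct_card)
    show "{S. S \<subseteq> {..<m} \<and> card S = t} \<subseteq> set ` Dl m t"
    proof
      fix S assume S: "S \<in> {S. S \<subseteq> {..<m} \<and> card S = t}"
      hence fin: "finite S" using finite_subset by blast
      have "sorted_list_of_set S \<in> Dl m t" using S fin unfolding Dl_def by auto
      moreover have "set (sorted_list_of_set S) = S" using fin by simp
      ultimately show "S \<in> set ` Dl m t" by (metis imageI)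
    qed
  qed
  have "card (Dl m t) = card (set ` Dl m t)" using inj by (simp add: card_image)
  also have "\<dots> = m choose t" unfolding img using n_subsets[of "{..<m}" t] by simp
  finally show ?thesis .
qed

lemma colsK_eq: "colsK q m t = LS t (\<lambda>_. {..<q}) \<times> Dl m t"
  unfolding colsK_def LS_def Dl_def by (auto simp: all_set_conv_all_nth)

lemma finite_Dl: "finite (Dl m t)"
  by (rule finite_subset[OF _ finite_lists_length_eq[of "{..<m}" t]]) (auto simp: Dl_def)

lemma finite_colsK: "finite (colsK q m t)"
  unfolding colsK_eq by (simp add: finite_LS_const finite_Dl)

lemma card_colsK: "card (colsK q m t) = (m choose t) * q ^ t"
  unfolding colsK_eq by (simp add: card_cartesian_product card_LS_const card_Dl)

lemma star_count:
  assumes qz: "0 < z" "z < q" and col: "(b, d) \<in> colsK q m t"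
  shows "card {j \<in> rowsF q z m t. pent q z m t j (b, d) = None}
         = Lpar q z ^ t * (q ^ m - q ^ (m - t) * (q - z) ^ t)"
proof -
  note c = colsK_D[OF col]
  define A where "A = (\<lambda>l. {x. x < q \<and> (\<forall>i<t. d ! i = l \<longrightarrow> x \<notin> Xset q z (b ! i))})"
  define NS where "NS = LS m A \<times> LS t (\<lambda>_. {..<Lpar q z})"
  have NSsub: "NS \<subseteq> rowsF q z m t" unfolding NS_def rowsF_eq LS_def A_def by auto
  have eq: "{j \<in> rowsF q z m t. pent q z m t j (b, d) = None} = rowsF q z m t - NS"
  proof (intro equalityI subsetI)
    fix j assume jj: "j \<in> {j \<in> rowsF q z m t. pent q z m t j (b, d) = None}"
    obtain a e where j: "j = (a, e)" by (cases j)
    have jr: "(a, e) \<in> rowsF q z m t" "pent q z m t (a, e) (b, d) = None" using jj j by auto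
    then obtain i where i: "i < t" "a ! (d ! i) \<in> Xset q z (b ! i)" unfolding pent_eq by (auto split: if_splits)
    have "a \<notin> LS m A"
    proof
      assume "a \<in> LS m A"
      hence "a ! (d ! i) \<in> A (d ! i)" using c i unfolding LS_def by auto
      thus False using i unfolding A_def by auto
    qed
    thus "j \<in> rowsF q z m t - NS" using j jr unfolding NS_def by auto
  next
    fix j assume jj: "j \<in> rowsF q z m t - NS"
    obtain a e where j: "j = (a, e)" by (cases j)
    have ar: "a \<in> LS m (\<lambda>_. {..<q})" "e \<in> LS t (\<lambda>_. {..<Lpar q z})" using jj j unfolding rowsF_eq by auto
    hence "a \<notin> LS m A" using jj j unfolding NS_def by auto
    then obtain l where l: "l < m" "a ! l \<notin> A l" using ar unfolding LS_def by auto
    hence "\<exists>i<t. a ! (d ! i) \<in> Xset q z (b ! i)" using ar unfolding A_def LS_def by auto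
    hence "pent q z m t (a, e) (b, d) = None" unfolding pent_eq by simp
    thus "j \<in> {j \<in> rowsF q z m t. pent q z m t j (b, d) = None}" using jj j by auto
  qed
  have cardA: "card (A l) = (if l \<in> set d then q - z else q)" if l: "l < m" for l
  proof (cases "l \<in> set d")
    case True
    then obtain i where i: "i < t" "d ! i = l" using c by (auto simp: in_set_conv_nth)
    have "A l = {..<q} - Xset q z (b ! i)"
    proof -
      have ii: "i' = i" if "i' < t" "d ! i' = l" for i' using nth_eq_iff_index_eq[of d i' i] c i that by simp
      show ?thesis
      proof (intro equalityI subsetI)
        fix x assume "x \<in> A l"
        thus "x \<in> {..<q} - Xset q z (b ! i)" unfolding A_def using i by blast
      next
        fix x assume x: "x \<in> {..<q} - Xset q z (b ! i)"
        have "\<forall>i'<t. d ! i' = l \<longrightarrow> x \<notin> Xset q z (b ! i')"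
        proof (intro allI impI)
          fix i' assume "i' < t" "d ! i' = l"
          hence "i' = i" by (rule ii)
          thus "x \<notin> Xset q z (b ! i')" using x by simp
        qed
        thus "x \<in> A l" unfolding A_def using x by simp
      qed
    qed
    hence "card (A l) = q - z" using card_Diff_subset[OF _ Xset_sub[of q z "b ! i"]] card_Xset[of z q "b ! i"] qz
        finite_subset[OF Xset_sub[of q z "b ! i"] finite_lessThan]
      by simp
    thus ?thesis using True by simp
  next
    case False
    hence "A l = {..<q}" unfolding A_def using c by (auto simp: in_set_conv_nth)
    thus ?thesis using False by simp
  qed
  have "card (LS m A) = (\<Prod>l<m. card (A l))" by (rule card_LS) (auto simp: A_def)
  also have "\<dots> = (\<Prod>l<m. if l \<in> set d then q - z else q)" using cardA by simp
  also have "\<dots> = (\<Prod>l\<in>set d. q - z) * (\<Prod>l\<in>{..<m} - set d. q)"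
  proof -
    have s1: "{..<m} \<inter> {x. x \<in> set d} = set d" using c by (auto simp: in_set_conv_nth)
    have s2: "{..<m} \<inter> - {x. x \<in> set d} = {..<m} - set d" by auto
    show ?thesis using prod.If_cases[of "{..<m}" "\<lambda>l. l \<in> set d" "\<lambda>_. q - z" "\<lambda>_. q"] s1 s2 by simp
  qed
  also have "\<dots> = (q - z) ^ t * q ^ (m - t)"
  proof -
    have "card (set d) = t" using c by (simp add: distinct_card)
    moreover have "set d \<subseteq> {..<m}" using c by (auto simp: in_set_conv_nth)
    ultimately have "card ({..<m} - set d) = m - t" by (simp add: card_Diff_subset)
    thus ?thesis using \<open>card (set d) = t\<close> by simp
  qed
  finally have cNS: "card NS = (q - z) ^ t * q ^ (m - t) * Lpar q z ^ t"
    unfolding NS_def by (simp add: card_cartesian_product card_LS_const)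
  have "card (rowsF q z m t - NS) = card (rowsF q z m t) - card NS"
    using NSsub finite_rowsF by (simp add: card_Diff_subset finite_subset)
  also have "\<dots> = Lpar q z ^ t * (q ^ m - q ^ (m - t) * (q - z) ^ t)"
    unfolding card_rowsF cNS by (simp add: diff_mult_distrib2 algebra_simps)
  finally show ?thesis using eq by simp
qed

lemma mod_via_dvd:
  assumes "int q dvd a - r" "0 \<le> r" "r < int q"
  shows "a mod int q = r"
proof -
  have "a mod int q = r mod int q" using assms(1) by (simp add: mod_eq_dvd_iff)
  thus ?thesis using assms(2,3) by simp
qed

lemma lemCu:
  assumes "x < q" "b < q" "x \<notin> Xset q z b" "0 < z" "z < q"
  shows "modq q (int x - int b - 1) < q - z"
proof -
  define k where "k = (int b - int x) mod int q"
  have kb: "int z \<le> k" "k < int q" using X_iff[of x q z b] assms unfolding k_def by auto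
  have d: "int q dvd (int b - int x) - k" unfolding k_def by (simp add: mod_eq_dvd_iff)
  have "(int x - int b - 1) - (int q - 1 - k) = - ((int b - int x) - k) - int q" by simp
  hence "int q dvd (int x - int b - 1) - (int q - 1 - k)" using d by (metis dvd_minus_iff dvd_diff dvd_refl)
  hence "(int x - int b - 1) mod int q = int q - 1 - k" using kb by (intro mod_via_dvd) auto
  thus ?thesis unfolding modq_def using kb by simp
qed

lemma lemDc:
  assumes "u < q - z" "y < q" "0 < z" "z < q"
  shows "modq q (int u + int y + 1) \<notin> Xset q z y \<and> modq q (int (modq q (int u + int y + 1)) - int y - 1) = u"
proof -
  define x where "x = modq q (int u + int y + 1)"
  have q0: "0 < q" using assms by simp
  have ix: "int x = (int u + int y + 1) mod int q" unfolding x_def using q0 by (simp add: int_modq)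
  have xq: "x < q" unfolding x_def using q0 by (simp add: modq_lt)
  have d: "int q dvd (int u + int y + 1) - int x" unfolding ix by (simp add: mod_eq_dvd_iff)
  have "(int y - int x) - (int q - int u - 1) = ((int u + int y + 1) - int x) - int q" by simp
  hence "int q dvd (int y - int x) - (int q - int u - 1)" using d by (metis dvd_diff dvd_refl)
  hence "(int y - int x) mod int q = int q - int u - 1" using assms by (intro mod_via_dvd) auto
  hence "x \<notin> Xset q z y" using X_iff[of x q z y] xq assms by simp
  moreover have "(int x - int y - 1) - int u = - ((int u + int y + 1) - int x)" by simp
  hence "int q dvd (int x - int y - 1) - int u" using d by (metis dvd_minus_iff)
  hence "(int x - int y - 1) mod int q = int u" using assms by (intro mod_via_dvd) auto
  hence "modq q (int x - int y - 1) = u" unfolding modq_def by simp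
  ultimately show ?thesis unfolding x_def by simp
qed

lemma pent_decomp:
  assumes "(a, e) \<in> rowsF q z m t" "(b, d) \<in> colsK q m t" "pent q z m t (a, e) (b, d) = Some s"
    "0 < z" "z < q"
  shows "s \<in> (\<lambda>(F, U). F @ U) ` (LS m (\<lambda>_. {..<q}) \<times> LS t (\<lambda>_. {..<q - z}))"
proof -
  note r = rowsF_D[OF assms(1)] and c = colsK_D[OF assms(2)]
  define g where "g = (\<lambda>i. modq q (int (b ! i) - int (e ! i) * int (q - z)))"
  define G where "G = fold (\<lambda>i c. c[d ! i := g i]) [0..<t] a"
  define U where "U = map (\<lambda>i. modq q (int (a ! (d ! i)) - int (b ! i) - 1)) [0..<t]"
  have N: "\<forall>i<t. a ! (d ! i) \<notin> Xset q z (b ! i)" and S: "s = G @ U"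
    using assms(3) unfolding pent_eq G_def g_def U_def by (auto split: if_splits)
  have md: "map (\<lambda>i. d ! i) [0..<t] = d" using c map_nth[of d] by simp
  have q0: "0 < q" using assms by simp
  have "G \<in> LS m (\<lambda>_. {..<q})"
    unfolding LS_def
  proof (intro CollectI conjI allI impI)
    show "length G = m" unfolding G_def using r by (simp add: fold_len)
    fix l assume l: "l < m"
    show "G ! l \<in> {..<q}"
    proof (cases "l \<in> set d")
      case True
      then obtain i where i: "i < t" "l = d ! i" using c by (auto simp: in_set_conv_nth)
      have "G ! l = g i" unfolding G_def i(2) using c r md i by (intro fold_in) auto
      thus ?thesis unfolding g_def using modq_lt q0 by simp
    next
      case False
      have "G ! l = a ! l" unfolding G_def by (rule fold_other) (use c False img_d'[of d t] in auto)
      thus ?thesis using r l by simp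
    qed
  qed
  moreover have "U \<in> LS t (\<lambda>_. {..<q - z})"
    unfolding LS_def U_def using N lemCu r c assms(4,5) by auto
  ultimately show ?thesis unfolding S by (auto intro!: image_eqI[of _ _ "(G, U)"])
qed

lemma pent_construct:
  assumes "F \<in> LS m (\<lambda>_. {..<q})" "U \<in> LS t (\<lambda>_. {..<q - z})" "0 < z" "z < q" "t \<le> m" "0 < Lpar q z"
  shows "\<exists>j\<in>rowsF q z m t. \<exists>k\<in>colsK q m t. pent q z m t j k = Some (F @ U)"
proof -
  have F: "length F = m" "\<forall>l<m. F ! l < q" and U: "length U = t" "\<forall>i<t. U ! i < q - z"
    using assms(1,2) unfolding LS_def by auto
  have q0: "0 < q" using assms by simp
  define d where "d = [0..<t]"
  define e where "e = (replicate t 0 :: nat list)"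
  define b where "b = take t F"
  define a where "a = map (\<lambda>l. if l < t then modq q (int (U ! l) + int (F ! l) + 1) else F ! l) [0..<m]"
  have row: "(a, e) \<in> rowsF q z m t"
    unfolding rowsF_def a_def e_def using F assms(6) modq_lt[OF q0] by (auto simp: in_set_conv_nth)
  have col: "(b, d) \<in> colsK q m t"
    unfolding colsK_def b_def d_def using F assms(5) by (auto simp: in_set_conv_nth strict_sorted_iff)
  have ai: "a ! i = modq q (int (U ! i) + int (F ! i) + 1)" if "i < t" for i
    unfolding a_def using that assms(5) by simp
  have bi: "b ! i = F ! i" if "i < t" for i unfolding b_def using that by simp
  have D: "modq q (int (U ! i) + int (F ! i) + 1) \<notin> Xset q z (F ! i) \<and>
           modq q (int (modq q (int (U ! i) + int (F ! i) + 1)) - int (F ! i) - 1) = U ! i" if "i < t" for i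
    using lemDc[of "U ! i" q z "F ! i"] U F that assms by simp
  have N: "\<not> (\<exists>i<t. a ! (d ! i) \<in> Xset q z (b ! i))"
    using D ai bi unfolding d_def by simp
  define g where "g = (\<lambda>i. modq q (int (b ! i) - int (e ! i) * int (q - z)))"
  have mdd: "map (\<lambda>i. [0..<t] ! i) [0..<t] = [0..<t]" using map_nth[of "[0..<t]"] by simp
  have Geq: "fold (\<lambda>i c. c[d ! i := g i]) [0..<t] a = F"
  proof (rule nth_equalityI)
    show "length (fold (\<lambda>i c. c[d ! i := g i]) [0..<t] a) = length F"
      using F by (simp add: fold_len a_def)
    fix l assume "l < length (fold (\<lambda>i c. c[d ! i := g i]) [0..<t] a)"
    hence l: "l < m" by (simp add: fold_len a_def)
    show "fold (\<lambda>i c. c[d ! i := g i]) [0..<t] a ! l = F ! l"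
    proof (cases "l < t")
      case True
      have "fold (\<lambda>i c. c[d ! i := g i]) [0..<t] a ! (d ! l) = g l"
        using True l mdd unfolding d_def by (intro fold_in) (auto simp: a_def)
      moreover have "g l = F ! l" unfolding g_def e_def using True bi F l
        by (simp add: modq_def)
      ultimately show ?thesis using True unfolding d_def by simp
    next
      case False
      have "fold (\<lambda>i c. c[d ! i := g i]) [0..<t] a ! l = a ! l"
        by (rule fold_other) (use False in \<open>auto simp: d_def\<close>)
      thus ?thesis using False l unfolding a_def by simp
    qed
  qed
  have Ueq: "map (\<lambda>i. modq q (int (a ! (d ! i)) - int (b ! i) - 1)) [0..<t] = U"
    using D ai bi U unfolding d_def by (intro nth_equalityI) auto
  have "pent q z m t (a, e) (b, d) = Some (F @ U)"
    using N Geq Ueq unfolding pent_eq g_def by simp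
  thus ?thesis using row col by blast
qed

lemma real_part2:
  fixes L q z m t :: nat
  assumes "0 < L" "0 < q" "z \<le> q" "t \<le> m"
  shows "real (L ^ t * (q ^ m - q ^ (m - t) * (q - z) ^ t)) / real (L ^ t * q ^ m)
         = 1 - ((real q - real z) / real q) ^ t"
proof -
  have qm: "q ^ m = q ^ (m - t) * q ^ t" using assms(4) by (simp add: power_add[symmetric])
  have le: "q ^ (m - t) * (q - z) ^ t \<le> q ^ m" unfolding qm by (simp add: power_mono)
  define a where "a = real q ^ (m - t)"
  define Q where "Q = real q ^ t"
  define W where "W = (real q - real z) ^ t"
  have rqm: "real q ^ m = a * Q" unfolding a_def Q_def using assms(4) by (simp add: power_add[symmetric])
  have rd: "real (q ^ m - q ^ (m - t) * (q - z) ^ t) = a * Q - a * W"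
    using le assms(3) unfolding a_def Q_def W_def by (simp add: of_nat_diff qm)
  have nz: "a \<noteq> 0" "Q \<noteq> 0" "real L ^ t \<noteq> 0" unfolding a_def Q_def using assms by auto
  have "real (L ^ t * (q ^ m - q ^ (m - t) * (q - z) ^ t)) / real (L ^ t * q ^ m)
      = (real L ^ t * (a * Q - a * W)) / (real L ^ t * (a * Q))"
    by (simp only: of_nat_mult rd) (simp only: of_nat_power rqm)
  also have "\<dots> = 1 - W / Q" using nz by (simp add: field_simps)
  also have "W / Q = ((real q - real z) / real q) ^ t" unfolding W_def Q_def by (simp add: power_divide)
  finally show ?thesis .
qed

lemma real_part3:
  fixes L q z m t :: nat
  assumes "0 < L" "0 < q" "z \<le> q"
  shows "real ((q - z) ^ t * q ^ m) / real (L ^ t * q ^ m) = (real q - real z) ^ t / real L ^ t"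
  using assms by (simp add: of_nat_diff)

lemma c3:
  assumes qz: "0 < z" "z < q"
    and j: "j1 \<in> rowsF q z m t" "j2 \<in> rowsF q z m t"
    and k: "k1 \<in> colsK q m t" "k2 \<in> colsK q m t"
    and s: "pent q z m t j1 k1 = Some s" "pent q z m t j2 k2 = Some s"
    and n: "pent q z m t j1 k2 \<noteq> None"
  shows "j1 = j2 \<and> k1 = k2"
proof -
  obtain a e where j1: "j1 = (a, e)" by (cases j1)
  obtain a' e' where j2: "j2 = (a', e')" by (cases j2)
  obtain b d where k1: "k1 = (b, d)" by (cases k1)
  obtain b' d' where k2: "k2 = (b', d')" by (cases k2)
  show ?thesis using key[OF qz, of a e m t a' e' b d b' d' s] assms j1 j2 k1 k2 by simp
qed

lemma sym_card:
  assumes "0 < z" "z < q" "t \<le> m" "0 < Lpar q z"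
  shows "card {s. \<exists>j\<in>rowsF q z m t. \<exists>k\<in>colsK q m t. pent q z m t j k = Some s} = (q - z) ^ t * q ^ m"
proof -
  have eq: "{s. \<exists>j\<in>rowsF q z m t. \<exists>k\<in>colsK q m t. pent q z m t j k = Some s}
      = (\<lambda>(F, U). F @ U) ` (LS m (\<lambda>_. {..<q}) \<times> LS t (\<lambda>_. {..<q - z}))"
  proof (intro equalityI subsetI)
    fix s assume "s \<in> {s. \<exists>j\<in>rowsF q z m t. \<exists>k\<in>colsK q m t. pent q z m t j k = Some s}"
    then obtain j k where jk: "j \<in> rowsF q z m t" "k \<in> colsK q m t" "pent q z m t j k = Some s" by blast
    obtain a e where "j = (a, e)" by (cases j)
    obtain b d where "k = (b, d)" by (cases k)
    show "s \<in> (\<lambda>(F, U). F @ U) ` (LS m (\<lambda>_. {..<q}) \<times> LS t (\<lambda>_. {..<q - z}))"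
      using pent_decomp[of a e q z m t b d s] jk \<open>j = _\<close> \<open>k = _\<close> assms by simp
  next
    fix s assume "s \<in> (\<lambda>(F, U). F @ U) ` (LS m (\<lambda>_. {..<q}) \<times> LS t (\<lambda>_. {..<q - z}))"
    then obtain x where x: "x \<in> LS m (\<lambda>_. {..<q}) \<times> LS t (\<lambda>_. {..<q - z})" "s = (\<lambda>(F, U). F @ U) x"
      by (rule imageE)
    obtain F U where "x = (F, U)" by (cases x)
    hence FU: "F \<in> LS m (\<lambda>_. {..<q})" "U \<in> LS t (\<lambda>_. {..<q - z})" "s = F @ U" using x by auto
    show "s \<in> {s. \<exists>j\<in>rowsF q z m t. \<exists>k\<in>colsK q m t. pent q z m t j k = Some s}"
      using pent_construct[OF FU(1,2) assms] FU(3) by simp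
  qed
  have inj: "inj_on (\<lambda>(F, U). F @ U) (LS m (\<lambda>_. {..<q}) \<times> LS t (\<lambda>_. {..<q - z}))"
  proof (rule inj_onI)
    fix x y assume "x \<in> LS m (\<lambda>_. {..<q}) \<times> LS t (\<lambda>_. {..<q - z})" "y \<in> LS m (\<lambda>_. {..<q}) \<times> LS t (\<lambda>_. {..<q - z})"
      "(\<lambda>(F, U). F @ U) x = (\<lambda>(F, U). F @ U) y"
    moreover obtain F U where "x = (F, U)" by (cases x)
    moreover obtain F' U' where "y = (F', U')" by (cases y)
    ultimately have "F @ U = F' @ U'" "length F = length F'" by (auto simp: LS_def)
    thus "x = y" using \<open>x = (F, U)\<close> \<open>y = (F', U')\<close> by simp
  qed
  show ?thesis unfolding eq using inj
    by (simp add: card_image card_cartesian_product card_LS_const)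
qed

theorem theorem2:
  fixes q z m t :: nat
  assumes "0 < q" "0 < z" "0 < m" "0 < t" "2 \<le> q" "z < q" "t < m"
  shows "is_PDA (rowsF q z m t) (colsK q m t) (pent q z m t)
           ((m choose t) * q ^ t)
           (Lpar q z ^ t * q ^ m)
           (Lpar q z ^ t * (q ^ m - q ^ (m - t) * (q - z) ^ t))
           ((q - z) ^ t * q ^ m)
       \<and> real (Lpar q z ^ t * (q ^ m - q ^ (m - t) * (q - z) ^ t)) / real (Lpar q z ^ t * q ^ m)
           = 1 - ((real q - real z) / real q) ^ t
       \<and> real ((q - z) ^ t * q ^ m) / real (Lpar q z ^ t * q ^ m)
           = (real q - real z) ^ t / real (Lpar q z) ^ t"
proof -
  have L0: "0 < Lpar q z" unfolding Lpar_def using assms by (simp add: div_greater_zero_iff)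
  have pda: "is_PDA (rowsF q z m t) (colsK q m t) (pent q z m t)
           ((m choose t) * q ^ t)
           (Lpar q z ^ t * q ^ m)
           (Lpar q z ^ t * (q ^ m - q ^ (m - t) * (q - z) ^ t))
           ((q - z) ^ t * q ^ m)"
    unfolding is_PDA_def
  proof (intro conjI ballI allI impI)
    show "finite (rowsF q z m t)" by (rule finite_rowsF)
    show "finite (colsK q m t)" by (rule finite_colsK)
    show "card (colsK q m t) = (m choose t) * q ^ t" by (rule card_colsK)
    show "card (rowsF q z m t) = Lpar q z ^ t * q ^ m" by (rule card_rowsF)
    fix k assume "k \<in> colsK q m t"
    moreover obtain b d where "k = (b, d)" by (cases k)
    ultimately show "card {j \<in> rowsF q z m t. pent q z m t j k = None} =
        Lpar q z ^ t * (q ^ m - q ^ (m - t) * (q - z) ^ t)"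
      using star_count[of z q b d m t] assms(2,6) by simp
  next
    show "card {s. \<exists>j\<in>rowsF q z m t. \<exists>k\<in>colsK q m t. pent q z m t j k = Some s} = (q - z) ^ t * q ^ m"
      by (rule sym_card) (use assms L0 in auto)
  next
    fix j1 j2 k1 k2 s
    assume j: "j1 \<in> rowsF q z m t" "j2 \<in> rowsF q z m t" and k: "k1 \<in> colsK q m t" "k2 \<in> colsK q m t"
      and s: "pent q z m t j1 k1 = Some s" "pent q z m t j2 k2 = Some s" and ne: "(j1, k1) \<noteq> (j2, k2)"
    have n1: "pent q z m t j1 k2 = None"
    proof (rule ccontr)
      assume "pent q z m t j1 k2 \<noteq> None"
      hence "j1 = j2 \<and> k1 = k2" by (rule c3[OF assms(2) assms(6) j k s])
      thus False using ne by simp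
    qed
    have n2: "pent q z m t j2 k1 = None"
    proof (rule ccontr)
      assume "pent q z m t j2 k1 \<noteq> None"
      hence "j2 = j1 \<and> k2 = k1" by (rule c3[OF assms(2) assms(6) j(2) j(1) k(2) k(1) s(2) s(1)])
      thus False using ne by simp
    qed
    show "pent q z m t j1 k2 = None" by (rule n1)
    show "pent q z m t j2 k1 = None" by (rule n2)
    show "j1 \<noteq> j2" using n1 s(2) by auto
    show "k1 \<noteq> k2" using n2 s(2) by auto
  qed
  define A where "A = q ^ (m - t)"
  define Q where "Q = q ^ t"
  define W where "W = (q - z) ^ t"
  have qm: "q ^ m = A * Q" unfolding A_def Q_def using assms by (simp add: power_add[symmetric])
  have WQ: "W \<le> Q" unfolding W_def Q_def by (simp add: power_mono)
  have A0: "0 < A" "0 < Q" unfolding A_def Q_def using assms by simp_all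
  have rz: "real (q - z) = real q - real z" using assms by simp
  have part2: "real (Lpar q z ^ t * (q ^ m - q ^ (m - t) * (q - z) ^ t)) / real (Lpar q z ^ t * q ^ m)
           = 1 - ((real q - real z) / real q) ^ t"
    by (rule real_part2) (use assms L0 in auto)
  have part3: "real ((q - z) ^ t * q ^ m) / real (Lpar q z ^ t * q ^ m)
           = (real q - real z) ^ t / real (Lpar q z) ^ t"
    by (rule real_part3) (use assms L0 in auto)
  show ?thesis using pda part2 part3 by simp
qed

end
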